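(* Let $t\in\mathbb{Z}_+$ and $\alpha\in(0,1)$. Let $\mathcal{Q}_1,\dots,\mathcal{Q}_t$ be probability distributions on $\mathbb{R}$ with continuous CDFs $F_1,\dots,F_t$. Let $\mathcal{D}_1,\dots,\mathcal{D}_t$ be independent datasets, where $\mathcal{D}_j=\{u_{j,i}\}_{i=1}^{B_j}$ consists of $B_j\ge 1$ i.i.d. samples from $\mathcal{Q}_j$. Fix $k\in\{1,\dots,t\}$ and $\delta\in(0,1)$. Then with probability at least $1-\delta$, $$\big|F_t(\widehat{q}_{t,k})-(1-\alpha)\big|\le \phi(t,k)+\psi(t,k,\delta).$$
   Context: For a CDF $F$ and $\gamma\in(0,1)$, the left $\gamma$-quantile is $\mathsf{Q}^-_\gamma(F)=\inf\{x\in\mathbb{R}:F(x)\ge\gamma\}$. Let $B_{t,k}=\sum_{j=t-k+1}^t B_j$, and let $\widehat{F}_{t,k}(x)=\frac{1}{B_{t,k}}\sum_{j=t-k+1}^t\sum_{i=1}^{B_j}\mathbf{1}\{x\ge u_{j,i}\}$ be the empirical CDF of the data in the last $k$ periods. Define $\widehat{q}_{t,k}=\mathsf{Q}^-_{1-\alpha}(\widehat{F}_{t,k})$, $\phi(t,k)=\max_{t-k+1\le j\le t}\|F_j-F_t\|_\infty$, and $\psi(t,k,\delta)=\frac{5}{4}\sqrt{\frac{2\alpha(1-\alpha)\log(2/\delta)}{B_{t,k}}}+\frac{4\log(2/\delta)}{B_{t,k}}$. *)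

theory Defs
  imports "HOL-Probability.Probability"
begin

definition left_quantile :: "real \<Rightarrow> (real \<Rightarrow> real) \<Rightarrow> real" where
  "left_quantile \<gamma> F = Inf {x. F x \<ge> \<gamma>}"

definition Btk :: "(nat \<Rightarrow> nat) \<Rightarrow> nat \<Rightarrow> nat \<Rightarrow> nat" where
  "Btk B t k = (\<Sum>j\<in>{t-k+1..t}. B j)"

definition emp_cdf :: "(nat \<Rightarrow> nat) \<Rightarrow> (nat \<Rightarrow> nat \<Rightarrow> real) \<Rightarrow> nat \<Rightarrow> nat \<Rightarrow> real \<Rightarrow> real" where
  "emp_cdf B v t k x =
     (\<Sum>j\<in>{t-k+1..t}. \<Sum>i\<in>{1..B j}. (if x \<ge> v j i then 1 else 0)) / real (Btk B t k)"

definition qhat :: "real \<Rightarrow> (nat \<Rightarrow> nat) \<Rightarrow> (nat \<Rightarrow> nat \<Rightarrow> real) \<Rightarrow> nat \<Rightarrow> nat \<Rightarrow> real" where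
  "qhat \<alpha> B v t k = left_quantile (1 - \<alpha>) (emp_cdf B v t k)"

definition sup_dist :: "(real \<Rightarrow> real) \<Rightarrow> (real \<Rightarrow> real) \<Rightarrow> real" where
  "sup_dist F G = (SUP x. \<bar>F x - G x\<bar>)"

definition phi :: "(nat \<Rightarrow> real \<Rightarrow> real) \<Rightarrow> nat \<Rightarrow> nat \<Rightarrow> real" where
  "phi F t k = Max ((\<lambda>j. sup_dist (F j) (F t)) ` {t-k+1..t})"

definition psi :: "real \<Rightarrow> (nat \<Rightarrow> nat) \<Rightarrow> nat \<Rightarrow> nat \<Rightarrow> real \<Rightarrow> real" where
  "psi \<alpha> B t k \<delta> =
     5/4 * sqrt (2 * \<alpha> * (1 - \<alpha>) * ln (2/\<delta>) / real (Btk B t k))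
     + 4 * ln (2/\<delta>) / real (Btk B t k)"

end

theory Submission
  imports Defs "HOL-Probability.Probability"
begin


lemma exp_quad_bound:
  fixes z :: real assumes "z \<le> 2/3"
  shows "exp z \<le> 1 + z + 3/4 * z^2"
proof -
  obtain t where t: "\<bar>t\<bar> \<le> \<bar>z\<bar>" and e: "exp z = (\<Sum>m<3. z ^ m / fact m) + exp t / fact 3 * z ^ 3"
    using Maclaurin_exp_le[of z 3] by blast
  have s: "(\<Sum>m<3. z ^ m / fact m) = 1 + z + z^2/2"
    by (simp add: eval_nat_numeral fact_numeral)
  show ?thesis
  proof (cases "z \<ge> 0")
    case True
    have "t \<le> 2/3" using t assms True by linarith
    hence "exp t \<le> exp (2/3)" by simp
    also have "exp (2/3::real) \<le> 1 + 2/3 + (2/3)^2" by (rule exp_bound) auto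
    finally have et: "exp t \<le> 19/9" by (simp add: power2_eq_square)
    have "exp t / fact 3 * z ^ 3 = (exp t * z) * z^2 / 6"
      by (simp add: fact_numeral power2_eq_square power3_eq_cube)
    also have "\<dots> \<le> (19/9 * (2/3)) * z^2 / 6"
      apply (intro divide_right_mono mult_right_mono mult_mono) using et True assms by auto
    also have "\<dots> \<le> z^2/4" by simp
    finally show ?thesis using e s by linarith
  next
    case False
    have z3: "z^3 \<le> 0"
    proof -
      have "z^3 = z^2 * z" by (simp add: power2_eq_square power3_eq_cube)
      also have "\<dots> \<le> 0" using False by (intro mult_nonneg_nonpos) auto
      finally show ?thesis .
    qed
    have "exp t / fact 3 * z ^ 3 \<le> 0"
      using z3 by (intro mult_nonneg_nonpos) auto
    moreover have "z^2/2 \<le> 3/4 * z^2" by simp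
    ultimately show ?thesis using e s by linarith
  qed
qed

lemma (in prob_space) chernoff:
  fixes Y :: "'i \<Rightarrow> 'a \<Rightarrow> real"
  assumes fin: "finite I" and ind: "indep_vars (\<lambda>_. borel) Y I"
    and bnd: "\<And>i \<omega>. i \<in> I \<Longrightarrow> \<omega> \<in> space M \<Longrightarrow> \<bar>Y i \<omega>\<bar> \<le> 1"
    and mean: "\<And>i. i \<in> I \<Longrightarrow> expectation (Y i) = 0"
    and l0: "0 \<le> l" and l1: "l \<le> 2/3"
  shows "prob {\<omega> \<in> space M. s \<le> (\<Sum>i\<in>I. Y i \<omega>)}
     \<le> exp (- l * s + 3/4 * l^2 * (\<Sum>i\<in>I. expectation (\<lambda>\<omega>. (Y i \<omega>)^2)))"
proof -
  have meas[measurable]: "\<And>i. i \<in> I \<Longrightarrow> Y i \<in> borel_measurable M"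
    using ind unfolding indep_vars_def by auto
  have intY: "integrable M (Y i)" if "i \<in> I" for i
    by (rule integrable_const_bound[where B=1]) (use bnd that in auto)
  have intY2: "integrable M (\<lambda>\<omega>. (Y i \<omega>)^2)" if "i \<in> I" for i
  proof (rule integrable_const_bound[where B=1])
    show "AE x in M. norm ((Y i x)^2) \<le> 1"
      using bnd[OF that] by (auto simp: abs_square_le_1)
  qed (use that in measurable)
  have intE: "integrable M (\<lambda>\<omega>. exp (l * Y i \<omega>))" if "i \<in> I" for i
  proof (rule integrable_const_bound[where B="exp l"])
    show "AE x in M. norm (exp (l * Y i x)) \<le> exp l"
      using bnd[OF that] l0 by (auto intro!: always_eventually simp: abs_le_iff mult_left_le)
  qed (use that in measurable)
  have ind2: "indep_vars (\<lambda>_. borel) (\<lambda>i \<omega>. exp (l * Y i \<omega>)) I"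
    by (rule indep_vars_compose2[OF ind]) measurable
  have prodE: "expectation (\<lambda>\<omega>. \<Prod>i\<in>I. exp (l * Y i \<omega>)) = (\<Prod>i\<in>I. expectation (\<lambda>\<omega>. exp (l * Y i \<omega>)))"
    by (rule indep_vars_lebesgue_integral[OF fin ind2 intE])
  have each: "expectation (\<lambda>\<omega>. exp (l * Y i \<omega>)) \<le> exp (3/4 * l^2 * expectation (\<lambda>\<omega>. (Y i \<omega>)^2))"
    if i: "i \<in> I" for i
  proof -
    have "expectation (\<lambda>\<omega>. exp (l * Y i \<omega>)) \<le> expectation (\<lambda>\<omega>. 1 + l * Y i \<omega> + 3/4 * l^2 * (Y i \<omega>)^2)"
    proof (rule integral_mono)
      show "integrable M (\<lambda>\<omega>. 1 + l * Y i \<omega> + 3/4 * l^2 * (Y i \<omega>)^2)"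
        using intY[OF i] intY2[OF i] by auto
      fix \<omega> assume "\<omega> \<in> space M"
      hence "\<bar>Y i \<omega>\<bar> \<le> 1" using bnd i by auto
      hence "l * Y i \<omega> \<le> 2/3"
        using l0 l1 by (smt (verit) abs_le_iff mult_left_le mult_minus_right mult_nonneg_nonneg)
      from exp_quad_bound[OF this] show "exp (l * Y i \<omega>) \<le> 1 + l * Y i \<omega> + 3/4 * l^2 * (Y i \<omega>)^2"
        by (simp add: power_mult_distrib)
    qed (use intE[OF i] in auto)
    also have "\<dots> = 1 + l * expectation (Y i) + 3/4 * l^2 * expectation (\<lambda>\<omega>. (Y i \<omega>)^2)"
      using intY[OF i] intY2[OF i] prob_space by simp
    also have "\<dots> = 1 + 3/4 * l^2 * expectation (\<lambda>\<omega>. (Y i \<omega>)^2)" using mean[OF i] by simp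
    also have "\<dots> \<le> exp (3/4 * l^2 * expectation (\<lambda>\<omega>. (Y i \<omega>)^2))"
      by (rule exp_ge_add_one_self_aux) (simp add: add.commute exp_ge_add_one_self)
    finally show ?thesis .
  qed
  have "prob {\<omega> \<in> space M. s \<le> (\<Sum>i\<in>I. Y i \<omega>)}
       \<le> prob {\<omega> \<in> space M. exp (l * s) \<le> exp (l * (\<Sum>i\<in>I. Y i \<omega>))}"
    by (rule finite_measure_mono) (auto intro: mult_left_mono l0)
  also have "\<dots> \<le> expectation (\<lambda>\<omega>. exp (l * (\<Sum>i\<in>I. Y i \<omega>))) / exp (l * s)"
  proof (rule integral_Markov_inequality_measure[where A = "{\<omega> \<in> space M. exp (l * s) \<le> exp (l * (\<Sum>i\<in>I. Y i \<omega>))}"])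
    have "integrable M (\<lambda>\<omega>. \<Prod>i\<in>I. exp (l * Y i \<omega>))"
      by (rule indep_vars_integrable[OF fin ind2 intE])
    thus "integrable M (\<lambda>\<omega>. exp (l * (\<Sum>i\<in>I. Y i \<omega>)))"
      by (simp add: sum_distrib_left exp_sum fin)
  qed auto
  also have "expectation (\<lambda>\<omega>. exp (l * (\<Sum>i\<in>I. Y i \<omega>))) = (\<Prod>i\<in>I. expectation (\<lambda>\<omega>. exp (l * Y i \<omega>)))"
    using prodE by (simp add: sum_distrib_left exp_sum fin)
  also have "\<dots> \<le> (\<Prod>i\<in>I. exp (3/4 * l^2 * expectation (\<lambda>\<omega>. (Y i \<omega>)^2)))"
    by (rule prod_mono) (use each in \<open>auto intro: integral_nonneg_AE\<close>)
  also have "\<dots> = exp (3/4 * l^2 * (\<Sum>i\<in>I. expectation (\<lambda>\<omega>. (Y i \<omega>)^2)))"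
    by (simp add: exp_sum fin sum_distrib_left)
  also have "\<dots> / exp (l * s) = exp (- l * s + 3/4 * l^2 * (\<Sum>i\<in>I. expectation (\<lambda>\<omega>. (Y i \<omega>)^2)))"
    by (simp add: exp_diff[symmetric])
  finally show ?thesis by (simp add: divide_right_mono)
qed

lemma (in prob_space) bernoulli_tail:
  fixes X :: "'i \<Rightarrow> 'a \<Rightarrow> real" and V \<epsilon> L \<sigma> :: real
  assumes fin: "finite I" and ne: "I \<noteq> {}" and ind: "indep_vars (\<lambda>_. borel) X I"
    and b01: "\<And>i \<omega>. i \<in> I \<Longrightarrow> \<omega> \<in> space M \<Longrightarrow> X i \<omega> = 0 \<or> X i \<omega> = 1"
    and sg: "\<sigma> = 1 \<or> \<sigma> = -1"
    and eps: "0 < \<epsilon>" and V: "(\<Sum>i\<in>I. expectation (X i)) / card I * (1 - (\<Sum>i\<in>I. expectation (X i)) / card I) \<le> V"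
    and Ve: "\<epsilon> \<le> V" and L: "L * (3 * V) \<le> card I * \<epsilon>^2"
  shows "prob {\<omega> \<in> space M. card I * \<epsilon> \<le> (\<Sum>i\<in>I. \<sigma> * (X i \<omega> - expectation (X i)))} \<le> exp (- L)"
proof -
  define p where "p i = expectation (X i)" for i
  define n where "n = real (card I)"
  have n0: "n > 0" using fin ne by (simp add: n_def card_gt_0_iff)
  have meas[measurable]: "\<And>i. i \<in> I \<Longrightarrow> X i \<in> borel_measurable M"
    using ind unfolding indep_vars_def by auto
  have intX: "integrable M (X i)" if ii: "i \<in> I" for i
  proof (rule integrable_const_bound[where B=1])
    show "AE x in M. norm (X i x) \<le> 1"
    proof (rule AE_I2)
      fix x assume xs: "x \<in> space M"
      show "norm (X i x) \<le> 1" using b01[OF ii xs] by auto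
    qed
  qed (use meas that in auto)
  have p01: "0 \<le> p i \<and> p i \<le> 1" if i: "i \<in> I" for i
  proof
    have x01: "\<And>\<omega>. \<omega> \<in> space M \<Longrightarrow> X i \<omega> \<le> 1 \<and> 0 \<le> X i \<omega>" using b01[OF i] by force
    show "0 \<le> p i" unfolding p_def using b01[OF i] by (intro integral_nonneg_AE AE_I2) force
    have "p i \<le> expectation (\<lambda>_. 1::real)" unfolding p_def
      by (rule integral_mono) (use x01 intX[OF i] in auto)
    thus "p i \<le> 1" by (simp add: prob_space)
  qed
  define Y where "Y i \<omega> = \<sigma> * (X i \<omega> - p i)" for i \<omega>
  have indY: "indep_vars (\<lambda>_. borel) Y I"
    unfolding Y_def by (rule indep_vars_compose2[OF ind]) measurable
  have bY: "\<bar>Y i \<omega>\<bar> \<le> 1" if "i \<in> I" "\<omega> \<in> space M" for i \<omega>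
    using b01[OF that] p01[OF that(1)] sg unfolding Y_def by (auto simp: abs_if)
  have mY: "expectation (Y i) = 0" if i: "i \<in> I" for i
    unfolding Y_def using intX[OF i] by (simp add: prob_space p_def)
  have vY: "expectation (\<lambda>\<omega>. (Y i \<omega>)^2) = p i * (1 - p i)" if i: "i \<in> I" for i
  proof -
    have "expectation (\<lambda>\<omega>. (Y i \<omega>)^2) = expectation (\<lambda>\<omega>. (1 - 2 * p i) * X i \<omega> + (p i)^2)"
      by (rule Bochner_Integration.integral_cong[OF refl]) (use b01[OF i] sg in \<open>auto simp: Y_def power2_eq_square algebra_simps\<close>)
    also have "\<dots> = (1 - 2 * p i) * p i + (p i)^2"
      using intX[OF i] by (simp add: prob_space p_def)
    finally show ?thesis by (simp add: algebra_simps power2_eq_square)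
  qed
  define pb where "pb = (\<Sum>i\<in>I. p i) / n"
  have sumvar: "(\<Sum>i\<in>I. expectation (\<lambda>\<omega>. (Y i \<omega>)^2)) \<le> n * V"
  proof -
    have "(\<Sum>i\<in>I. expectation (\<lambda>\<omega>. (Y i \<omega>)^2)) = (\<Sum>i\<in>I. p i) - (\<Sum>i\<in>I. (p i)^2)"
    proof -
      have "(\<Sum>i\<in>I. expectation (\<lambda>\<omega>. (Y i \<omega>)^2)) = (\<Sum>i\<in>I. p i - (p i)^2)"
        by (rule sum.cong) (use vY in \<open>auto simp: algebra_simps power2_eq_square\<close>)
      thus ?thesis by (simp add: sum_subtractf)
    qed
    also have "(\<Sum>i\<in>I. (p i)^2) \<ge> (\<Sum>i\<in>I. p i)^2 / n"
      using sum_squared_le_sum_of_squares[of p I] n0 by (simp add: n_def field_simps)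
    hence "(\<Sum>i\<in>I. p i) - (\<Sum>i\<in>I. (p i)^2) \<le> n * (pb * (1 - pb))"
      using n0 by (simp add: pb_def field_simps power2_eq_square)
    also have "\<dots> \<le> n * V" using V n0 unfolding pb_def p_def n_def by (intro mult_left_mono) auto
    finally show ?thesis .
  qed
  have V0: "V > 0" using eps Ve by simp
  define l where "l = 2 * \<epsilon> / (3 * V)"
  have l0: "0 \<le> l" using eps V0 by (simp add: l_def)
  have l1: "l \<le> 2/3" using Ve V0 by (simp add: l_def field_simps)
  have "prob {\<omega> \<in> space M. n * \<epsilon> \<le> (\<Sum>i\<in>I. Y i \<omega>)}
     \<le> exp (- l * (n * \<epsilon>) + 3/4 * l^2 * (\<Sum>i\<in>I. expectation (\<lambda>\<omega>. (Y i \<omega>)^2)))"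
    by (rule chernoff[OF fin indY bY mY l0 l1])
  also have "\<dots> \<le> exp (- l * (n * \<epsilon>) + 3/4 * l^2 * (n * V))"
    using sumvar by (simp add: mult_left_mono)
  also have "- l * (n * \<epsilon>) + 3/4 * l^2 * (n * V) = - (n * \<epsilon>^2 / (3 * V))"
    using V0 by (simp add: l_def field_simps power2_eq_square)
  also have "exp \<dots> \<le> exp (- L)"
    using L V0 by (simp add: n_def field_simps)
  finally show ?thesis by (simp add: Y_def n_def p_def)
qed



lemma quantile_step:
  fixes w :: "'i \<Rightarrow> real" and c :: real and F :: "real \<Rightarrow> real"
  assumes fin: "finite I" and ne: "I \<noteq> {}" and c0: "0 < c" and c1: "c \<le> 1"
    and F: "\<And>x. F x = (\<Sum>p\<in>I. if x \<ge> w p then 1 else 0) / real (card I)"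
  shows "left_quantile c F \<le> y \<longleftrightarrow> c \<le> F y"
proof -
  define S where "S = {x. F x \<ge> c}"
  define D where "D = w ` I"
  have finD: "finite D" and neD: "D \<noteq> {}" using fin ne by (auto simp: D_def)
  have N0: "real (card I) > 0" using fin ne by (simp add: card_gt_0_iff)
  have Fmono: "F x \<le> F z" if "x \<le> z" for x z
    unfolding F using that N0 by (intro divide_right_mono sum_mono) auto
  have Feq: "F x = F z" if "\<And>p. p \<in> I \<Longrightarrow> (x \<ge> w p \<longleftrightarrow> z \<ge> w p)" for x z
    unfolding F by (intro arg_cong2[where f="(/)"] sum.cong) (use that in auto)
  have MaxS: "Max D \<in> S"
  proof -
    have "F (Max D) = (\<Sum>p\<in>I. 1) / real (card I)"
      unfolding F by (intro arg_cong2[where f="(/)"] sum.cong) (use finD in \<open>auto simp: D_def\<close>)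
    thus ?thesis using N0 c1 by (simp add: S_def)
  qed
  hence Sne: "S \<noteq> {}" by auto
  have lowb: "Min D \<le> s" if "s \<in> S" for s
  proof (rule ccontr)
    assume "\<not> Min D \<le> s"
    have "\<not> w p \<le> s" if "p \<in> I" for p
    proof -
      have "Min D \<le> w p" using finD that by (intro Min_le) (auto simp: D_def)
      thus ?thesis using \<open>\<not> Min D \<le> s\<close> by simp
    qed
    hence "F s = (\<Sum>p\<in>I. 0) / real (card I)"
      unfolding F by (intro arg_cong2[where f="(/)"] sum.cong) auto
    thus False using that c0 by (simp add: S_def)
  qed
  hence bdd: "bdd_below S" by (rule bdd_belowI)
  define m where "m = Inf S"
  have mS: "m \<in> S"
  proof (rule ccontr)
    assume nm: "m \<notin> S"
    have "\<exists>s\<in>S. m \<le> s \<and> (\<forall>p\<in>I. \<not> (m < w p \<and> w p \<le> s))"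
    proof (cases "{d\<in>D. m < d} = {}")
      case True
      obtain s where "s \<in> S" using Sne by auto
      moreover have "m \<le> s" unfolding m_def using bdd \<open>s \<in> S\<close> by (rule cInf_lower[rotated])
      ultimately show ?thesis using True by (auto simp: D_def)
    next
      case False
      define m' where "m' = Min {d\<in>D. m < d}"
      have fE: "finite {d\<in>D. m < d}" using finD by auto
      have "m' \<in> {d\<in>D. m < d}" unfolding m'_def using False fE by (rule Min_in[rotated])
      hence "m < m'" by auto
      then obtain s where s: "s \<in> S" "s < m'" using cInf_lessD[OF Sne] by (auto simp: m_def)
      have "m \<le> s" unfolding m_def using bdd s(1) by (rule cInf_lower[rotated])
      moreover have "\<not> (m < w p \<and> w p \<le> s)" if "p \<in> I" for p
      proof
        assume "m < w p \<and> w p \<le> s"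
        hence "m' \<le> w p" unfolding m'_def using fE that by (intro Min_le) (auto simp: D_def)
        thus False using s \<open>m < w p \<and> w p \<le> s\<close> by simp
      qed
      ultimately show ?thesis using s by auto
    qed
    then obtain s where s: "s \<in> S" "m \<le> s" "\<forall>p\<in>I. \<not> (m < w p \<and> w p \<le> s)" by auto
    have "F s = F m" by (rule Feq) (use s in force)
    thus False using s nm by (simp add: S_def)
  qed
  show ?thesis
  proof
    assume "left_quantile c F \<le> y"
    hence "m \<le> y" by (simp add: left_quantile_def m_def S_def)
    thus "c \<le> F y" using Fmono mS by (force simp: S_def)
  next
    assume "c \<le> F y"
    hence "m \<le> y" unfolding m_def using bdd by (intro cInf_lower) (auto simp: S_def)
    thus "left_quantile c F \<le> y" by (simp add: left_quantile_def m_def S_def)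
  qed
qed


lemma ivt_cdf_like:
  fixes g :: "real \<Rightarrow> real"
  assumes cont: "continuous_on UNIV g" and bot: "(g \<longlongrightarrow> 0) at_bot" and top: "(g \<longlongrightarrow> 1) at_top"
    and y0: "0 < y" and y1: "y < 1"
  shows "\<exists>x. g x = y"
proof -
  have "\<forall>\<^sub>F x in at_bot. g x < y" using order_tendstoD(2)[OF bot y0] .
  then obtain a where a: "\<And>x. x \<le> a \<Longrightarrow> g x < y" by (auto simp: eventually_at_bot_linorder)
  have "\<forall>\<^sub>F x in at_top. y < g x" using order_tendstoD(1)[OF top y1] .
  then obtain b where b: "\<And>x. x \<ge> b \<Longrightarrow> y < g x" by (auto simp: eventually_at_top_linorder)
  have "g (min a b) \<le> y" using a[of "min a b"] by simp
  moreover have "y \<le> g (max a b)" using b[of "max a b"] by simp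
  moreover have "continuous_on {min a b..max a b} g" using cont by (rule continuous_on_subset) auto
  moreover have "min a b \<le> max a b" by simp
  ultimately show ?thesis using IVT'[of g "min a b" y "max a b"] by blast
qed

theorem theorem1:
  fixes M :: "'a measure"
    and Q :: "nat \<Rightarrow> real measure"
    and B :: "nat \<Rightarrow> nat"
    and u :: "nat \<Rightarrow> nat \<Rightarrow> 'a \<Rightarrow> real"
    and t k :: nat and \<alpha> \<delta> :: real
  assumes "prob_space M"
    and "t \<ge> 1"
    and "0 < \<alpha>" "\<alpha> < 1"
    and "\<And>j. j \<in> {1..t} \<Longrightarrow> real_distribution (Q j)"
    and "\<And>j. j \<in> {1..t} \<Longrightarrow> continuous_on UNIV (cdf (Q j))"
    and "\<And>j. j \<in> {1..t} \<Longrightarrow> B j \<ge> 1"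
    and "prob_space.indep_vars M (\<lambda>_. borel) (\<lambda>(j, i). u j i)
           {(j, i). j \<in> {1..t} \<and> i \<in> {1..B j}}"
    and "\<And>j i. j \<in> {1..t} \<Longrightarrow> i \<in> {1..B j} \<Longrightarrow> distr M borel (u j i) = Q j"
    and "k \<in> {1..t}"
    and "0 < \<delta>" "\<delta> < 1"
  shows "measure M {\<omega> \<in> space M.
            \<bar>cdf (Q t) (qhat \<alpha> B (\<lambda>j i. u j i \<omega>) t k) - (1 - \<alpha>)\<bar>
              \<le> phi (\<lambda>j. cdf (Q j)) t k + psi \<alpha> B t k \<delta>} \<ge> 1 - \<delta>"
proof -
  interpret P: prob_space M by (rule assms(1))
  note ind = assms(8)
  define J where "J = {t-k+1..t}"
  define I where "I = Sigma J (\<lambda>j. {1..B j})"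
  define U where "U = (\<lambda>(j, i). u j i)"
  define N where "N = Btk B t k"
  define c where "c = 1 - \<alpha>"
  define L where "L = ln (2/\<delta>)"
  define \<epsilon> where "\<epsilon> = psi \<alpha> B t k \<delta>"
  define v where "v = \<alpha> * (1 - \<alpha>)"
  define G where "G x = (\<Sum>p\<in>I. cdf (Q (fst p)) x) / real N" for x
  define Fh where "Fh \<omega> = emp_cdf B (\<lambda>j i. u j i \<omega>) t k" for \<omega>
  define q where "q \<omega> = qhat \<alpha> B (\<lambda>j i. u j i \<omega>) t k" for \<omega>
  define X where "X x p \<omega> = (if x \<ge> U p \<omega> then 1 else (0::real))" for x p \<omega>
  have kt: "1 \<le> k" "k \<le> t" using assms(10) by auto
  have JI: "J \<subseteq> {1..t}" using kt by (auto simp: J_def)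
  have tJ: "t \<in> J" using kt by (auto simp: J_def)
  have finI: "finite I" by (simp add: I_def J_def)
  have neI: "I \<noteq> {}"
  proof -
    have "(t, 1) \<in> I" using tJ JI assms(7)[of t] by (auto simp: I_def)
    thus ?thesis by auto
  qed
  have IA: "I \<subseteq> {(j, i). j \<in> {1..t} \<and> i \<in> {1..B j}}" using JI by (auto simp: I_def)
  have cardI: "card I = N" unfolding I_def N_def Btk_def J_def by (simp add: card_SigmaI)
  have N0: "real N > 0" using finI neI cardI by (metis card_gt_0_iff of_nat_0_less_iff)
  have indU: "P.indep_vars (\<lambda>_. borel) U I"
    unfolding U_def by (rule P.indep_vars_subset[OF ind IA])
  have measU: "U p \<in> borel_measurable M" if "p \<in> I" for p
    using indU that unfolding P.indep_vars_def by auto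
  have QI: "fst p \<in> {1..t}" if "p \<in> I" for p using that JI by (auto simp: I_def)
  have distU: "distr M borel (U p) = Q (fst p)" if "p \<in> I" for p
    using that IA assms(9) by (auto simp: U_def I_def)
  have rd: "real_distribution (Q (fst p))" if "p \<in> I" for p using assms(5) QI[OF that] .
  have fbm: "finite_borel_measure (Q (fst p))" if "p \<in> I" for p
    by (rule real_distribution.finite_borel_measure_M[OF rd[OF that]])
  have indX: "P.indep_vars (\<lambda>_. borel) (X x) I" for x
    unfolding X_def by (rule P.indep_vars_compose2[OF indU]) measurable
  have measX: "X x p \<in> borel_measurable M" if "p \<in> I" for x p
    using measU[OF that] unfolding X_def by measurable
  have EX: "P.expectation (X x p) = cdf (Q (fst p)) x" if p: "p \<in> I" for x p
  proof -
    have "P.expectation (X x p) = P.expectation (indicator (U p -` {..x} \<inter> space M))"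
      by (rule Bochner_Integration.integral_cong[OF refl]) (auto simp: X_def indicator_def)
    also have "\<dots> = measure M (U p -` {..x} \<inter> space M)" by (simp add: Int_absorb2)
    also have "\<dots> = measure (distr M borel (U p)) {..x}"
      by (rule measure_distr[symmetric]) (use measU[OF p] in auto)
    also have "\<dots> = cdf (Q (fst p)) x" by (simp add: distU[OF p] cdf_def)
    finally show ?thesis .
  qed
  have Fh: "Fh \<omega> x = (\<Sum>p\<in>I. if x \<ge> U p \<omega> then 1 else 0) / real (card I)" for \<omega> x
  proof -
    have "(\<Sum>j\<in>J. \<Sum>i\<in>{1..B j}. (if x \<ge> u j i \<omega> then 1 else 0::real))
        = (\<Sum>(j,i)\<in>I. (if x \<ge> u j i \<omega> then 1 else 0::real))"
      unfolding I_def by (rule sum.Sigma) (auto simp: J_def)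
    also have "\<dots> = (\<Sum>p\<in>I. if x \<ge> U p \<omega> then 1 else 0)"
      by (rule sum.cong) (auto simp: U_def)
    finally show ?thesis unfolding Fh_def emp_cdf_def cardI J_def[symmetric] N_def by simp
  qed
  have FhX: "Fh \<omega> x = (\<Sum>p\<in>I. X x p \<omega>) / real N" for \<omega> x
    unfolding Fh cardI X_def by simp
  have c0: "0 < c" "c \<le> 1" using assms(3,4) by (auto simp: c_def)
  have qchar: "q \<omega> \<le> y \<longleftrightarrow> c \<le> Fh \<omega> y" for \<omega> y
  proof -
    have "q \<omega> = left_quantile c (Fh \<omega>)" by (simp add: q_def qhat_def Fh_def c_def)
    thus ?thesis using quantile_step[OF finI neI c0 Fh] by simp
  qed
  have sumdev: "(\<Sum>p\<in>I. X x p \<omega> - P.expectation (X x p)) = real N * (Fh \<omega> x - G x)" for x \<omega>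
  proof -
    have "(\<Sum>p\<in>I. X x p \<omega> - P.expectation (X x p)) = (\<Sum>p\<in>I. X x p \<omega>) - (\<Sum>p\<in>I. cdf (Q (fst p)) x)"
      by (simp add: sum_subtractf EX)
    moreover have "real N * (Fh \<omega> x - G x) = (\<Sum>p\<in>I. X x p \<omega>) - (\<Sum>p\<in>I. cdf (Q (fst p)) x)"
      using N0 unfolding FhX G_def by (simp add: right_diff_distrib)
    ultimately show ?thesis by simp
  qed
  have EG: "(\<Sum>p\<in>I. P.expectation (X x p)) / real (card I) = G x" for x
    by (simp add: EX G_def cardI)
  have Gmono: "G x \<le> G y" if "x \<le> y" for x y
    unfolding G_def using N0 that
    by (intro divide_right_mono sum_mono finite_borel_measure.cdf_nondecreasing[OF fbm]) auto
  have G01: "0 \<le> G x \<and> G x \<le> 1" for x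
  proof
    show "0 \<le> G x" unfolding G_def using N0
      by (intro divide_nonneg_pos sum_nonneg finite_borel_measure.cdf_nonneg[OF fbm]) auto
    have "(\<Sum>p\<in>I. cdf (Q (fst p)) x) \<le> (\<Sum>p\<in>I. 1)"
      by (intro sum_mono real_distribution.cdf_bounded_prob[OF rd])
    thus "G x \<le> 1" unfolding G_def using N0 cardI by simp
  qed
  have Gcont: "continuous_on UNIV G"
    unfolding G_def using N0
    by (intro continuous_on_divide continuous_on_sum continuous_on_const) (use assms(6) QI in auto)
  have Gbot: "(G \<longlongrightarrow> 0) at_bot"
  proof -
    have "((\<lambda>x. (\<Sum>p\<in>I. cdf (Q (fst p)) x) / real N) \<longlongrightarrow> (\<Sum>p\<in>I. 0) / real N) at_bot"
      by (intro tendsto_divide tendsto_sum tendsto_const) (use N0 finite_borel_measure.cdf_lim_at_bot[OF fbm] in auto)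
    thus ?thesis by (simp add: G_def[abs_def])
  qed
  have Gtop: "(G \<longlongrightarrow> 1) at_top"
  proof -
    have "((\<lambda>x. (\<Sum>p\<in>I. cdf (Q (fst p)) x) / real N) \<longlongrightarrow> (\<Sum>p\<in>I. 1) / real N) at_top"
      by (intro tendsto_divide tendsto_sum tendsto_const) (use N0 real_distribution.cdf_lim_at_top_prob[OF rd] in auto)
    thus ?thesis using N0 cardI by (simp add: G_def[abs_def])
  qed
  have L0: "L > 0" using assms(11,12) by (simp add: L_def)
  have eL: "exp (- L) = \<delta> / 2" using assms(11) by (simp add: L_def exp_minus)
  have v0: "0 \<le> v" using assms(3,4) by (simp add: v_def)
  define A where "A = 5/4 * sqrt (2 * v * L / real N)"
  define C where "C = 4 * L / real N"
  have epsAC: "\<epsilon> = A + C" by (simp add: \<epsilon>_def psi_def A_def C_def v_def L_def N_def mult.assoc)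
  have A0: "0 \<le> A" using v0 L0 N0 by (simp add: A_def)
  have C0: "0 < C" using L0 N0 by (simp add: C_def)
  have eps0: "0 < \<epsilon>" using A0 C0 epsAC by simp
  have AA: "A^2 = 25/8 * v * L / real N"
  proof -
    have w0: "0 \<le> 2 * v * L / real N" using v0 L0 N0 by simp
    have "A^2 = 25/16 * (sqrt (2 * v * L / real N) * sqrt (2 * v * L / real N))"
      unfolding A_def power2_eq_square by (simp only: mult_ac)
    also have "sqrt (2 * v * L / real N) * sqrt (2 * v * L / real N) = 2 * v * L / real N"
      using w0 by (rule real_sqrt_mult_self[THEN trans, OF abs_of_nonneg])
    finally show ?thesis by simp
  qed
  have keyL: "L * (3 * (v + \<epsilon>)) \<le> real N * \<epsilon>^2"
  proof -
    have "\<epsilon>^2 = A * \<epsilon> + C * \<epsilon>" by (simp add: epsAC power2_eq_square algebra_simps)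
    also have "A * \<epsilon> \<ge> A * A" using A0 C0 epsAC by (intro mult_left_mono) auto
    hence "A * \<epsilon> + C * \<epsilon> \<ge> A^2 + C * \<epsilon>" by (simp add: power2_eq_square)
    finally have "\<epsilon>^2 \<ge> 25/8 * v * L / real N + 4 * L * \<epsilon> / real N" using AA by (simp add: C_def)
    hence "real N * \<epsilon>^2 \<ge> 25/8 * v * L + 4 * L * \<epsilon>" using N0 by (simp add: field_simps)
    moreover have "25/8 * v * L \<ge> 3 * v * L" using v0 L0 by simp
    moreover have "4 * L * \<epsilon> \<ge> 3 * L * \<epsilon>" using eps0 L0 by simp
    ultimately show ?thesis by (simp add: algebra_simps)
  qed
  have epsV: "\<epsilon> \<le> v + \<epsilon>" using v0 by simp
  have up: "\<exists>Au\<in>P.events. P.prob Au \<le> \<delta>/2 \<and> (\<forall>\<omega>\<in>space M. c + \<epsilon> < G (q \<omega>) \<longrightarrow> \<omega> \<in> Au)"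
  proof (cases "c + \<epsilon> < 1")
    case False
    thus ?thesis using G01 assms(11) by (intro bexI[of _ "{}"]) (auto, smt (verit))
  next
    case True
    obtain x0 where x0: "G x0 = c + \<epsilon>" using ivt_cdf_like[OF Gcont Gbot Gtop, of "c + \<epsilon>"] True c0 eps0 by auto
    define Au where "Au = {\<omega> \<in> space M. real (card I) * \<epsilon> \<le> (\<Sum>p\<in>I. (-1) * (X x0 p \<omega> - P.expectation (X x0 p)))}"
    have mx[measurable]: "(\<lambda>\<omega>. (\<Sum>p\<in>I. (-1) * (X x0 p \<omega> - P.expectation (X x0 p)))) \<in> borel_measurable M"
      by (intro borel_measurable_sum borel_measurable_times borel_measurable_diff borel_measurable_const measX)
    have "Au \<in> P.events" unfolding Au_def by measurable
    moreover have "P.prob Au \<le> exp (- L)" unfolding Au_def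
    proof (rule P.bernoulli_tail[OF finI neI indX])
      show "X x0 i \<omega> = 0 \<or> X x0 i \<omega> = 1" for i \<omega> by (simp add: X_def)
      show "(\<Sum>i\<in>I. P.expectation (X x0 i)) / real (card I) * (1 - (\<Sum>i\<in>I. P.expectation (X x0 i)) / real (card I)) \<le> v + \<epsilon>"
      proof -
        have "(c + \<epsilon>) * (1 - (c + \<epsilon>)) = v + \<epsilon> * (2 * \<alpha> - 1) - \<epsilon>^2"
          by (simp add: c_def v_def algebra_simps power2_eq_square)
        moreover have "\<epsilon> * (2 * \<alpha> - 1) \<le> \<epsilon>" using eps0 assms(4) by (simp add: mult_left_le)
        moreover have "0 \<le> \<epsilon>^2" by simp
        ultimately show ?thesis unfolding EG x0 by linarith
      qed
      show "L * (3 * (v + \<epsilon>)) \<le> real (card I) * \<epsilon>^2" using keyL cardI by simp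
    qed (use eps0 epsV in auto)
    moreover have "\<forall>\<omega>\<in>space M. c + \<epsilon> < G (q \<omega>) \<longrightarrow> \<omega> \<in> Au"
    proof (intro ballI impI)
      fix \<omega> assume \<omega>: "\<omega> \<in> space M" and g: "c + \<epsilon> < G (q \<omega>)"
      have "\<not> c \<le> Fh \<omega> x0"
      proof
        assume "c \<le> Fh \<omega> x0"
        hence "q \<omega> \<le> x0" using qchar by simp
        hence "G (q \<omega>) \<le> G x0" by (rule Gmono)
        thus False using g x0 by simp
      qed
      hence "real N * \<epsilon> \<le> real N * (G x0 - Fh \<omega> x0)" using x0 N0 by (intro mult_left_mono) auto
      also have "\<dots> = (\<Sum>p\<in>I. (-1) * (X x0 p \<omega> - P.expectation (X x0 p)))"
      proof -
        have "(\<Sum>p\<in>I. (-1) * (X x0 p \<omega> - P.expectation (X x0 p))) = - (\<Sum>p\<in>I. X x0 p \<omega> - P.expectation (X x0 p))"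
          by (simp add: sum_subtractf)
        thus ?thesis using sumdev[of x0 \<omega>] by (simp add: algebra_simps)
      qed
      finally show "\<omega> \<in> Au" using \<omega> cardI by (simp add: Au_def)
    qed
    ultimately show ?thesis using eL by auto
  qed
  have low: "\<exists>Al\<in>P.events. P.prob Al \<le> \<delta>/2 \<and> (\<forall>\<omega>\<in>space M. G (q \<omega>) < c - \<epsilon> \<longrightarrow> \<omega> \<in> Al)"
  proof (cases "0 < c - \<epsilon>")
    case False
    thus ?thesis using G01 assms(11) by (intro bexI[of _ "{}"]) (auto, smt (verit))
  next
    case True
    obtain x1 where x1: "G x1 = c - \<epsilon>" using ivt_cdf_like[OF Gcont Gbot Gtop, of "c - \<epsilon>"] True c0 eps0 by auto
    define Al where "Al = {\<omega> \<in> space M. real (card I) * \<epsilon> \<le> (\<Sum>p\<in>I. 1 * (X x1 p \<omega> - P.expectation (X x1 p)))}"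
    have mx[measurable]: "(\<lambda>\<omega>. (\<Sum>p\<in>I. 1 * (X x1 p \<omega> - P.expectation (X x1 p)))) \<in> borel_measurable M"
      by (intro borel_measurable_sum borel_measurable_times borel_measurable_diff borel_measurable_const measX)
    have "Al \<in> P.events" unfolding Al_def by measurable
    moreover have "P.prob Al \<le> exp (- L)" unfolding Al_def
    proof (rule P.bernoulli_tail[OF finI neI indX])
      show "X x1 i \<omega> = 0 \<or> X x1 i \<omega> = 1" for i \<omega> by (simp add: X_def)
      show "(\<Sum>i\<in>I. P.expectation (X x1 i)) / real (card I) * (1 - (\<Sum>i\<in>I. P.expectation (X x1 i)) / real (card I)) \<le> v + \<epsilon>"
      proof -
        have "(c - \<epsilon>) * (1 - (c - \<epsilon>)) = v + \<epsilon> * (1 - 2 * \<alpha>) - \<epsilon>^2"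
          by (simp add: c_def v_def algebra_simps power2_eq_square)
        moreover have "\<epsilon> * (1 - 2 * \<alpha>) \<le> \<epsilon>" using eps0 assms(3) by (simp add: mult_left_le)
        moreover have "0 \<le> \<epsilon>^2" by simp
        ultimately show ?thesis unfolding EG x1 by linarith
      qed
      show "L * (3 * (v + \<epsilon>)) \<le> real (card I) * \<epsilon>^2" using keyL cardI by simp
    qed (use eps0 epsV in auto)
    moreover have "\<forall>\<omega>\<in>space M. G (q \<omega>) < c - \<epsilon> \<longrightarrow> \<omega> \<in> Al"
    proof (intro ballI impI)
      fix \<omega> assume \<omega>: "\<omega> \<in> space M" and g: "G (q \<omega>) < c - \<epsilon>"
      have "q \<omega> \<le> x1"
      proof (rule ccontr)
        assume "\<not> q \<omega> \<le> x1"
        hence "G x1 \<le> G (q \<omega>)" by (intro Gmono) simp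
        thus False using g x1 by simp
      qed
      hence "c \<le> Fh \<omega> x1" using qchar by simp
      hence "real N * \<epsilon> \<le> real N * (Fh \<omega> x1 - G x1)" using x1 N0 by (intro mult_left_mono) auto
      also have "\<dots> = (\<Sum>p\<in>I. 1 * (X x1 p \<omega> - P.expectation (X x1 p)))"
        using sumdev[of x1 \<omega>] by simp
      finally show "\<omega> \<in> Al" using \<omega> cardI by (simp add: Al_def)
    qed
    ultimately show ?thesis using eL by auto
  qed
  obtain Au where Au: "Au \<in> P.events" "P.prob Au \<le> \<delta>/2" "\<And>\<omega>. \<omega> \<in> space M \<Longrightarrow> c + \<epsilon> < G (q \<omega>) \<Longrightarrow> \<omega> \<in> Au"
    using up by blast
  obtain Al where Al: "Al \<in> P.events" "P.prob Al \<le> \<delta>/2" "\<And>\<omega>. \<omega> \<in> space M \<Longrightarrow> G (q \<omega>) < c - \<epsilon> \<Longrightarrow> \<omega> \<in> Al"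
    using low by blast
  define ph where "ph = phi (\<lambda>j. cdf (Q j)) t k"
  have phb: "\<bar>cdf (Q t) x - G x\<bar> \<le> ph" for x
  proof -
    have each: "\<bar>cdf (Q j) x - cdf (Q t) x\<bar> \<le> ph" if j: "j \<in> J" for j
    proof -
      have jt: "j \<in> {1..t}" "t \<in> {1..t}" using j JI tJ by auto
      have bd: "\<bar>cdf (Q j) y - cdf (Q t) y\<bar> \<le> 1" for y
        using finite_borel_measure.cdf_nonneg[OF real_distribution.finite_borel_measure_M[OF assms(5)[OF jt(1)]], of y] real_distribution.cdf_bounded_prob[OF assms(5)[OF jt(1)], of y]
              finite_borel_measure.cdf_nonneg[OF real_distribution.finite_borel_measure_M[OF assms(5)[OF jt(2)]], of y] real_distribution.cdf_bounded_prob[OF assms(5)[OF jt(2)], of y]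
        by linarith
      have "\<bar>cdf (Q j) x - cdf (Q t) x\<bar> \<le> sup_dist (cdf (Q j)) (cdf (Q t))"
        unfolding sup_dist_def by (rule cSUP_upper) (use bd in \<open>auto intro!: bdd_aboveI[of _ 1]\<close>)
      also have "\<dots> \<le> ph" unfolding ph_def phi_def using j
        by (intro Max_ge) (auto simp: J_def)
      finally show ?thesis .
    qed
    have "G x - cdf (Q t) x = (\<Sum>p\<in>I. cdf (Q (fst p)) x - cdf (Q t) x) / real N"
      using N0 cardI by (simp add: G_def sum_subtractf field_simps)
    also have "\<bar>\<dots>\<bar> \<le> (\<Sum>p\<in>I. \<bar>cdf (Q (fst p)) x - cdf (Q t) x\<bar>) / real N"
      using N0 by (simp add: sum_abs divide_right_mono)
    also have "\<dots> \<le> (\<Sum>p\<in>I. ph) / real N"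
      using N0 by (intro divide_right_mono sum_mono each) (auto simp: I_def)
    also have "\<dots> = ph" using N0 cardI by simp
    finally show ?thesis by simp
  qed
  have qmeas: "q \<in> borel_measurable M"
  proof (rule borel_measurableI_le)
    fix y
    have [measurable]: "(\<lambda>\<omega>. Fh \<omega> y) \<in> borel_measurable M"
      unfolding FhX by (intro borel_measurable_divide borel_measurable_sum borel_measurable_const measX)
    have "{\<omega> \<in> space M. q \<omega> \<le> y} = {\<omega> \<in> space M. c \<le> Fh \<omega> y}" using qchar by simp
    also have "\<dots> \<in> sets M" by measurable
    finally show "{\<omega> \<in> space M. q \<omega> \<le> y} \<in> sets M" .
  qed
  define Good where "Good = {\<omega> \<in> space M. \<bar>cdf (Q t) (q \<omega>) - c\<bar> \<le> ph + \<epsilon>}"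
  have [measurable]: "cdf (Q t) \<in> borel_measurable borel"
    by (rule borel_measurable_continuous_onI) (use assms(6) tJ JI in auto)
  have [measurable]: "(\<lambda>\<omega>. cdf (Q t) (q \<omega>)) \<in> borel_measurable M"
    using qmeas by measurable
  have GoodM: "Good \<in> P.events" unfolding Good_def by measurable
  have sub: "space M - Good \<subseteq> Au \<union> Al"
  proof
    fix \<omega> assume w: "\<omega> \<in> space M - Good"
    hence \<omega>: "\<omega> \<in> space M" and ng: "\<not> \<bar>cdf (Q t) (q \<omega>) - c\<bar> \<le> ph + \<epsilon>" by (auto simp: Good_def)
    have "\<bar>cdf (Q t) (q \<omega>) - G (q \<omega>)\<bar> \<le> ph" by (rule phb)
    hence "c + \<epsilon> < G (q \<omega>) \<or> G (q \<omega>) < c - \<epsilon>" using ng by linarith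
    thus "\<omega> \<in> Au \<union> Al" using Au(3)[OF \<omega>] Al(3)[OF \<omega>] by auto
  qed
  have "P.prob (space M - Good) \<le> P.prob (Au \<union> Al)"
    by (rule P.finite_measure_mono[OF sub]) (use Au Al in auto)
  also have "\<dots> \<le> P.prob Au + P.prob Al" by (rule measure_subadditive) (use Au Al in \<open>auto simp: P.emeasure_eq_measure\<close>)
  also have "\<dots> \<le> \<delta>" using Au Al by simp
  finally have "1 - P.prob Good \<le> \<delta>" using P.prob_compl[OF GoodM] by simp
  thus ?thesis by (simp add: Good_def q_def ph_def \<epsilon>_def c_def)
qed

end
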